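(* Let $\mathcal{P}$ be a set of scripts, let $\Phi$ be the uniform abstraction defined by $\mathcal{P}$, and let $\Omega$ be an asymmetric abstraction defined by the same set of scripts $\mathcal{P}$ (with any choice of unrestricted units $\mathcal{U}'_i(s) \subseteq \mathcal{U}^r_i(s)$ at each state $s$). For a finite match with start state $s$, let $V_i^{\Phi}(s)$ be the optimal value of the game for player $i$ computed in the space induced by $\Phi$, and let $V_i^{\Omega}(s)$ be defined analogously for $\Omega$. Then $V_i^{\Omega}(s) \ge V_i^{\Phi}(s)$.
   Context: A match is a finite two-player zero-sum game with simultaneous moves between players $i$ and $-i$, given by a finite game tree: states $\mathcal{S}=\mathcal{D}\cup\mathcal{F}$ (non-terminal and terminal), a deterministic transition function $\mathcal{T}(s,a_i,a_{-i})$, and a utility $\mathcal{R}_i:\mathcal{F}\to\mathbb{R}$ with $\mathcal{R}_{-i}=-\mathcal{R}_i$. Each state contains units; at state $s$, $\mathcal{U}^r_i(s)$ denotes player $i$'s ready units, and $\mathcal{M}(s,u)$ denotes the set of legal moves of unit $u$ at $s$. A legal action of player $i$ at $s$ is a vector assigning one legal move to each ready unit of $i$; $\mathcal{A}_i(s)$ is the set of such actions. A script $\bar\sigma$ is a function mapping a state $s$ and a unit $u$ to a legal move $\bar\sigma(s,u)\in\mathcal{M}(s,u)$. For a set of scripts $\mathcal{P}$, let $\mathcal{M}(s,u,\mathcal{P})=\{\bar\sigma(s,u):\bar\sigma\in\mathcal{P}\}$. The uniform abstraction $\Phi$ induced by $\mathcal{P}$ restricts player $i$'s actions at each state $s$ to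 $\mathcal{A}'_i(s)$, the Cartesian product of $\mathcal{M}(s,u,\mathcal{P})$ over all $u\in\mathcal{U}^r_i(s)$. An asymmetric abstraction $\Omega$ induced by $\mathcal{P}$ and a set of unrestricted units $\mathcal{U}'_i(s)\subseteq\mathcal{U}^r_i(s)$ restricts player $i$'s actions at $s$ to $\mathcal{A}''_i(s)$, the Cartesian product of $\mathcal{M}(s,u,\mathcal{P})$ over $u\in\mathcal{U}^r_i(s)\setminus\mathcal{U}'_i(s)$ and of $\mathcal{M}(s,u')$ over $u'\in\mathcal{U}'_i(s)$. The optimal value $V_i^{\Phi}$ is defined by backward induction: $V_i^{\Phi}(z)=\mathcal{R}_i(z)$ for terminal $z$, and for non-terminal $s$, $V_i^{\Phi}(s)=\max_{\sigma_i}\min_{\sigma_{-i}}\sum_{a_i}\sum_{a_{-i}\in\mathcal{A}_{-i}(s)}\sigma_i(s,a_i)\sigma_{-i}(s,a_{-i})V_i^{\Phi}(\mathcal{T}(s,a_i,a_{-i}))$, where $\sigma_i$ ranges over probability distributions over $\mathcal{A}'_i(s)$ and $\sigma_{-i}$ over probability distributions over all of $\mathcal{A}_{-i}(s)$ (player $-i$ is unrestricted); $V_i^{\Omega}$ is defined the same way with $\mathcal{A}''_i(s)$ in place of $\mathcal{A}'_i(s)$. *)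

theory Defs
  imports Complex_Main "HOL-Library.FuncSet"
begin

definition mixed :: "'a set \<Rightarrow> ('a \<Rightarrow> real) set" where
  "mixed A = {\<sigma>. (\<forall>a\<in>A. 0 \<le> \<sigma> a) \<and> sum \<sigma> A = 1}"

text \<open>max over sigma_i of min over sigma_{-i} of the expected payoff
  (written with Sup/Inf; on finite action sets these are attained).\<close>
definition maxmin :: "'a set \<Rightarrow> 'b set \<Rightarrow> ('a \<Rightarrow> 'b \<Rightarrow> real) \<Rightarrow> real" where
  "maxmin A B f = (SUP \<sigma>\<in>mixed A. INF \<tau>\<in>mixed B.
      \<Sum>a\<in>A. \<Sum>b\<in>B. \<sigma> a * \<tau> b * f a b)"

definition legal_actions :: "('s \<Rightarrow> 'u set) \<Rightarrow> ('s \<Rightarrow> 'u \<Rightarrow> 'm set) \<Rightarrow> 's \<Rightarrow> ('u \<Rightarrow> 'm) set" where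
  "legal_actions Ur M s = Pi\<^sub>E (Ur s) (M s)"

definition script_moves :: "('s \<Rightarrow> 'u \<Rightarrow> 'm) set \<Rightarrow> 's \<Rightarrow> 'u \<Rightarrow> 'm set" where
  "script_moves P s u = (\<lambda>\<sigma>. \<sigma> s u) ` P"

definition uniform_actions :: "('s \<Rightarrow> 'u set) \<Rightarrow> ('s \<Rightarrow> 'u \<Rightarrow> 'm) set \<Rightarrow> 's \<Rightarrow> ('u \<Rightarrow> 'm) set" where
  "uniform_actions Ur P s = Pi\<^sub>E (Ur s) (script_moves P s)"

definition asym_actions :: "('s \<Rightarrow> 'u set) \<Rightarrow> ('s \<Rightarrow> 'u \<Rightarrow> 'm set) \<Rightarrow> ('s \<Rightarrow> 'u \<Rightarrow> 'm) set
      \<Rightarrow> ('s \<Rightarrow> 'u set) \<Rightarrow> 's \<Rightarrow> ('u \<Rightarrow> 'm) set" where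
  "asym_actions Ur M P Uu s =
     Pi\<^sub>E (Ur s) (\<lambda>u. if u \<in> Uu s then M s u else script_moves P s u)"

definition is_bi_value ::
  "('s \<Rightarrow> bool) \<Rightarrow> ('s \<Rightarrow> real) \<Rightarrow> ('s \<Rightarrow> 'a \<Rightarrow> 'b \<Rightarrow> 's)
   \<Rightarrow> ('s \<Rightarrow> 'a set) \<Rightarrow> ('s \<Rightarrow> 'b set) \<Rightarrow> ('s \<Rightarrow> real) \<Rightarrow> bool" where
  "is_bi_value isterm R T Ai Ao V \<longleftrightarrow>
     (\<forall>s. (isterm s \<longrightarrow> V s = R s) \<and>
          (\<not> isterm s \<longrightarrow> V s = maxmin (Ai s) (Ao s) (\<lambda>a b. V (T s a b))))"

end

theory Submission
  imports Defs
begin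

lemma mixed_le1:
  assumes "finite A" "\<sigma> \<in> mixed A" "a \<in> A"
  shows "\<sigma> a \<le> 1"
proof -
  have "\<sigma> a \<le> sum \<sigma> A"
    using assms by (intro member_le_sum) (auto simp: mixed_def)
  thus ?thesis using assms by (simp add: mixed_def)
qed

lemma mixed_ne:
  assumes "finite A" "A \<noteq> {}"
  shows "mixed A \<noteq> {}"
proof -
  obtain a0 where "a0 \<in> A" using assms by auto
  hence "(\<lambda>a. if a = a0 then 1 else 0) \<in> mixed A"
    using assms by (simp add: mixed_def)
  thus ?thesis by auto
qed

lemma payoff_bound:
  assumes "finite A" "finite B" "\<sigma> \<in> mixed A" "\<tau> \<in> mixed B"
  shows "\<bar>\<Sum>a\<in>A. \<Sum>b\<in>B. \<sigma> a * \<tau> b * h a b\<bar> \<le> (\<Sum>a\<in>A. \<Sum>b\<in>B. \<bar>h a b\<bar>)"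
proof -
  have "\<bar>\<Sum>a\<in>A. \<Sum>b\<in>B. \<sigma> a * \<tau> b * h a b\<bar> \<le> (\<Sum>a\<in>A. \<Sum>b\<in>B. \<bar>\<sigma> a * \<tau> b * h a b\<bar>)"
    by (rule order_trans[OF sum_abs sum_mono[OF sum_abs]])
  also have "\<dots> \<le> (\<Sum>a\<in>A. \<Sum>b\<in>B. \<bar>h a b\<bar>)"
  proof (intro sum_mono)
    fix a b assume a: "a \<in> A" and b: "b \<in> B"
    have s0: "0 \<le> \<sigma> a" "\<sigma> a \<le> 1" using assms a mixed_le1[OF assms(1,3) a] by (auto simp: mixed_def)
    have t0: "0 \<le> \<tau> b" "\<tau> b \<le> 1" using assms b mixed_le1[OF assms(2,4) b] by (auto simp: mixed_def)
    have "\<bar>\<sigma> a * \<tau> b * h a b\<bar> = \<sigma> a * \<tau> b * \<bar>h a b\<bar>"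
      using s0 t0 by (simp add: abs_mult)
    also have "\<dots> \<le> 1 * 1 * \<bar>h a b\<bar>"
      using s0 t0 by (intro mult_right_mono mult_mono) auto
    finally show "\<bar>\<sigma> a * \<tau> b * h a b\<bar> \<le> \<bar>h a b\<bar>" by simp
  qed
  finally show ?thesis .
qed

lemma maxmin_mono:
  assumes fA: "finite A'" "finite A''" and sub: "A' \<subseteq> A''" and fB: "finite B"
    and ne: "B \<noteq> {}" "A' \<noteq> {}"
    and le: "\<And>a b. a \<in> A' \<Longrightarrow> b \<in> B \<Longrightarrow> f a b \<le> g a b"
  shows "maxmin A' B f \<le> maxmin A'' B g"
proof -
  define F where "F = (\<lambda>\<sigma> \<tau>. \<Sum>a\<in>A'. \<Sum>b\<in>B. \<sigma> a * \<tau> b * f a b)"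
  define G where "G = (\<lambda>\<sigma> \<tau>. \<Sum>a\<in>A''. \<Sum>b\<in>B. \<sigma> a * \<tau> b * g a b)"
  have mB: "mixed B \<noteq> {}" using mixed_ne fB ne by auto
  have mA: "mixed A' \<noteq> {}" using mixed_ne fA ne by auto
  have bF: "bdd_below ((F \<sigma>) ` mixed B)" if "\<sigma> \<in> mixed A'" for \<sigma>
    unfolding bdd_below_def F_def
    using payoff_bound[OF fA(1) fB that, of _ f] by (intro exI[of _ "- (\<Sum>a\<in>A'. \<Sum>b\<in>B. \<bar>f a b\<bar>)"]) (force simp: abs_le_iff)
  have bG: "bdd_below ((G \<sigma>) ` mixed B)" if "\<sigma> \<in> mixed A''" for \<sigma>
    unfolding bdd_below_def G_def
    using payoff_bound[OF fA(2) fB that, of _ g] by (intro exI[of _ "- (\<Sum>a\<in>A''. \<Sum>b\<in>B. \<bar>g a b\<bar>)"]) (force simp: abs_le_iff)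
  obtain \<tau>0 where t0: "\<tau>0 \<in> mixed B" using mB by auto
  have bS: "bdd_above ((\<lambda>\<sigma>. INF \<tau>\<in>mixed B. G \<sigma> \<tau>) ` mixed A'')"
    unfolding bdd_above_def
  proof (intro exI[of _ "\<Sum>a\<in>A''. \<Sum>b\<in>B. \<bar>g a b\<bar>"] ballI, elim imageE)
    fix x \<sigma> assume x: "x = (INF \<tau>\<in>mixed B. G \<sigma> \<tau>)" and s: "\<sigma> \<in> mixed A''"
    have "x \<le> G \<sigma> \<tau>0" unfolding x by (rule cINF_lower[OF bG[OF s] t0])
    also have "\<dots> \<le> (\<Sum>a\<in>A''. \<Sum>b\<in>B. \<bar>g a b\<bar>)"
      using payoff_bound[OF fA(2) fB s t0, of g] unfolding G_def by linarith
    finally show "x \<le> (\<Sum>a\<in>A''. \<Sum>b\<in>B. \<bar>g a b\<bar>)" .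
  qed
  have "(SUP \<sigma>\<in>mixed A'. INF \<tau>\<in>mixed B. F \<sigma> \<tau>) \<le> (SUP \<sigma>\<in>mixed A''. INF \<tau>\<in>mixed B. G \<sigma> \<tau>)"
  proof (rule cSUP_least[OF mA])
    fix \<sigma> assume s: "\<sigma> \<in> mixed A'"
    define \<sigma>' where "\<sigma>' = (\<lambda>a. if a \<in> A' then \<sigma> a else 0)"
    have sum_eq: "sum \<sigma>' A'' = sum \<sigma> A'"
      unfolding \<sigma>'_def using sub fA by (simp add: sum.If_cases Int_absorb1)
    have s': "\<sigma>' \<in> mixed A''"
      using s sum_eq by (auto simp: mixed_def \<sigma>'_def)
    have FG: "F \<sigma> \<tau> \<le> G \<sigma>' \<tau>" if t: "\<tau> \<in> mixed B" for \<tau>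
    proof -
      have "G \<sigma>' \<tau> = (\<Sum>a\<in>A'. \<Sum>b\<in>B. \<sigma> a * \<tau> b * g a b)"
        unfolding G_def
        by (subst sum.mono_neutral_right[OF fA(2) sub]) (auto simp: \<sigma>'_def)
      moreover have "F \<sigma> \<tau> \<le> (\<Sum>a\<in>A'. \<Sum>b\<in>B. \<sigma> a * \<tau> b * g a b)"
        unfolding F_def
      proof (intro sum_mono)
        fix a b assume a: "a \<in> A'" and b: "b \<in> B"
        have "0 \<le> \<sigma> a * \<tau> b" using s t a b by (auto simp: mixed_def)
        thus "\<sigma> a * \<tau> b * f a b \<le> \<sigma> a * \<tau> b * g a b"
          using le[OF a b] by (simp add: mult_left_mono)
      qed
      ultimately show ?thesis by simp
    qed
    have "(INF \<tau>\<in>mixed B. F \<sigma> \<tau>) \<le> (INF \<tau>\<in>mixed B. G \<sigma>' \<tau>)"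
      using mB bF[OF s] FG by (intro cINF_mono) auto
    also have "\<dots> \<le> (SUP \<sigma>\<in>mixed A''. INF \<tau>\<in>mixed B. G \<sigma> \<tau>)"
      by (rule cSUP_upper[OF s' bS])
    finally show "(INF \<tau>\<in>mixed B. F \<sigma> \<tau>) \<le> (SUP \<sigma>\<in>mixed A''. INF \<tau>\<in>mixed B. G \<sigma> \<tau>)" .
  qed
  thus ?thesis unfolding maxmin_def F_def G_def .
qed

theorem theorem1:
  fixes isterm :: "'s \<Rightarrow> bool"
    and R :: "'s \<Rightarrow> real"
    and T :: "'s \<Rightarrow> ('u \<Rightarrow> 'm) \<Rightarrow> ('u \<Rightarrow> 'm) \<Rightarrow> 's"
    and Ui Uo :: "'s \<Rightarrow> 'u set"
    and M :: "'s \<Rightarrow> 'u \<Rightarrow> 'm set"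
    and rk :: "'s \<Rightarrow> nat"
    and P :: "('s \<Rightarrow> 'u \<Rightarrow> 'm) set"
    and Uu :: "'s \<Rightarrow> 'u set"
    and VPhi VOmega :: "'s \<Rightarrow> real"
    and s0 :: 's
  assumes fin_Ui: "\<And>s. finite (Ui s)"
    and fin_Uo: "\<And>s. finite (Uo s)"
    and fin_Mi: "\<And>s u. u \<in> Ui s \<Longrightarrow> finite (M s u) \<and> M s u \<noteq> {}"
    and fin_Mo: "\<And>s u. u \<in> Uo s \<Longrightarrow> finite (M s u) \<and> M s u \<noteq> {}"
    and finite_tree: "\<And>s a b. \<not> isterm s \<Longrightarrow> a \<in> legal_actions Ui M s \<Longrightarrow>
                         b \<in> legal_actions Uo M s \<Longrightarrow> rk (T s a b) < rk s"
    and P_ne: "P \<noteq> {}"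
    and P_legal: "\<And>\<sigma> s u. \<sigma> \<in> P \<Longrightarrow> u \<in> Ui s \<Longrightarrow> \<sigma> s u \<in> M s u"
    and Uu_sub: "\<And>s. Uu s \<subseteq> Ui s"
    and VPhi: "is_bi_value isterm R T (uniform_actions Ui P) (legal_actions Uo M) VPhi"
    and VOmega: "is_bi_value isterm R T (asym_actions Ui M P Uu) (legal_actions Uo M) VOmega"
  shows "VOmega s0 \<ge> VPhi s0"
proof -
  have smM: "script_moves P s u \<subseteq> M s u" if "u \<in> Ui s" for s u
    using P_legal that by (auto simp: script_moves_def)
  have sub1: "uniform_actions Ui P s \<subseteq> asym_actions Ui M P Uu s" for s
    unfolding uniform_actions_def asym_actions_def
    using smM Uu_sub by (intro PiE_mono) auto
  have sub2: "asym_actions Ui M P Uu s \<subseteq> legal_actions Ui M s" for s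
    unfolding legal_actions_def asym_actions_def
    using smM by (intro PiE_mono) auto
  have finL: "finite (legal_actions Ui M s)" for s
    unfolding legal_actions_def using fin_Ui fin_Mi by (intro finite_PiE) auto
  have finLo: "finite (legal_actions Uo M s)" for s
    unfolding legal_actions_def using fin_Uo fin_Mo by (intro finite_PiE) auto
  have neLo: "legal_actions Uo M s \<noteq> {}" for s
    unfolding legal_actions_def using fin_Mo by (auto simp: PiE_eq_empty_iff)
  have neU: "uniform_actions Ui P s \<noteq> {}" for s
    unfolding uniform_actions_def using P_ne by (auto simp: PiE_eq_empty_iff script_moves_def)
  have "VPhi s \<le> VOmega s" for s
  proof (induction "rk s" arbitrary: s rule: less_induct)
    case less
    show ?case
    proof (cases "isterm s")
      case True thus ?thesis using VPhi VOmega by (simp add: is_bi_value_def)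
    next
      case False
      have "maxmin (uniform_actions Ui P s) (legal_actions Uo M s) (\<lambda>a b. VPhi (T s a b))
          \<le> maxmin (asym_actions Ui M P Uu s) (legal_actions Uo M s) (\<lambda>a b. VOmega (T s a b))"
      proof (rule maxmin_mono)
        show "finite (uniform_actions Ui P s)"
          using finL sub1 sub2 by (meson finite_subset)
        show "finite (asym_actions Ui M P Uu s)"
          using finL sub2 by (meson finite_subset)
        fix a b assume a: "a \<in> uniform_actions Ui P s" and b: "b \<in> legal_actions Uo M s"
        have "a \<in> legal_actions Ui M s" using a sub1 sub2 by blast
        hence "rk (T s a b) < rk s" using finite_tree False b by blast
        thus "VPhi (T s a b) \<le> VOmega (T s a b)" by (rule less)
      qed (use sub1 finLo neLo neU in auto)
      thus ?thesis using VPhi VOmega False by (simp add: is_bi_value_def)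
    qed
  qed
  thus ?thesis by simp
qed

end
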